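(* Let $p,q$ be primes with $q>p\geq 5$. There are only finitely many triples $(\{x,y\},p,q)$ for which there exists a regular map $\mathcal{M}(G;r,t,\ell)$ of type $\{x,y\}$ with Euler characteristic $-pq$ such that $pq$ divides $|G|$.
   Context: A regular map is given algebraically as a quadruple $\mathcal{M}=\mathcal{M}(G;r,t,\ell)$ where $G$ is a finite group generated by three involutions $r,t,\ell$ with $t\ell=\ell t$. Its type is $\{|rt|,|r\ell|\}$, and its Euler characteristic is $\chi=-\frac{|G|(xy-2x-2y)}{4xy}$ where $x=|rt|$, $y=|r\ell|$. *)

theory Defs
  imports "HOL-Algebra.Generated_Groups" "HOL-Algebra.Multiplicative_Group" "HOL-Computational_Algebra.Primes" Complex_Main
begin

definition involution :: "('g, 'b) monoid_scheme \<Rightarrow> 'g \<Rightarrow> bool" where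
  "involution G a \<longleftrightarrow> a \<in> carrier G \<and> a \<noteq> \<one>\<^bsub>G\<^esub> \<and> a \<otimes>\<^bsub>G\<^esub> a = \<one>\<^bsub>G\<^esub>"

definition regular_map :: "('g, 'b) monoid_scheme \<Rightarrow> 'g \<Rightarrow> 'g \<Rightarrow> 'g \<Rightarrow> bool" where
  "regular_map G r t l \<longleftrightarrow> group G \<and> finite (carrier G) \<and>
     involution G r \<and> involution G t \<and> involution G l \<and>
     t \<otimes>\<^bsub>G\<^esub> l = l \<otimes>\<^bsub>G\<^esub> t \<and>
     generate G {r, t, l} = carrier G"

definition map_type :: "('g, 'b) monoid_scheme \<Rightarrow> 'g \<Rightarrow> 'g \<Rightarrow> 'g \<Rightarrow> nat set" where
  "map_type G r t l = {group.ord G (r \<otimes>\<^bsub>G\<^esub> t), group.ord G (r \<otimes>\<^bsub>G\<^esub> l)}"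

definition euler_char :: "('g, 'b) monoid_scheme \<Rightarrow> 'g \<Rightarrow> 'g \<Rightarrow> 'g \<Rightarrow> real" where
  "euler_char G r t l =
     (let x = real (group.ord G (r \<otimes>\<^bsub>G\<^esub> t)); y = real (group.ord G (r \<otimes>\<^bsub>G\<^esub> l))
      in - (real (order G) * (x * y - 2 * x - 2 * y)) / (4 * x * y))"

end

theory Submission
  imports Defs "HOL-Algebra.Sylow" "HOL-Algebra.Group_Action" "HOL-Algebra.Multiplicative_Group"
begin

lemma action_from_fun:
  fixes H (structure)
  assumes grp: "group H"
    and cl: "\<And>a x. a \<in> carrier H \<Longrightarrow> x \<in> E \<Longrightarrow> f a x \<in> E"
    and comp: "\<And>a b x. a \<in> carrier H \<Longrightarrow> b \<in> carrier H \<Longrightarrow> x \<in> E \<Longrightarrow> f (a \<otimes> b) x = f a (f b x)"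
    and one: "\<And>x. x \<in> E \<Longrightarrow> f \<one> x = x"
  shows "group_action H E (\<lambda>a. restrict (f a) E)"
proof -
  interpret H: group H by (rule grp)
  have bij: "restrict (f a) E \<in> Bij E" if a: "a \<in> carrier H" for a
  proof -
    have inv: "f (inv a) (f a x) = x" "f a (f (inv a) x) = x" if "x \<in> E" for x
      using comp[of "inv a" a x] comp[of a "inv a" x] one[of x] a that by auto
    have "bij_betw (f a) E E"
      apply (rule bij_betwI[where g="f (inv a)"])
      using cl a inv by auto
    then show ?thesis unfolding Bij_def by (auto simp: bij_betw_def inj_on_def)
  qed
  show ?thesis
    unfolding group_action_def group_hom_def group_hom_axioms_def
  proof (intro conjI)
    show "group H" by (rule grp)
    show "group (BijGroup E)" by (rule group_BijGroup)
    show "(\<lambda>a. restrict (f a) E) \<in> hom H (BijGroup E)"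
      unfolding hom_def BijGroup_def
      using bij
      by (auto simp: compose_def comp cl restrict_def fun_eq_iff)
  qed
qed

lemma orbit_count_mod:
  fixes H (structure)
  assumes grp: "group H" and cardH: "order H = q" and pq: "prime q" and finE: "finite E"
    and cl: "\<And>a x. a \<in> carrier H \<Longrightarrow> x \<in> E \<Longrightarrow> f a x \<in> E"
    and comp: "\<And>a b x. a \<in> carrier H \<Longrightarrow> b \<in> carrier H \<Longrightarrow> x \<in> E \<Longrightarrow> f (a \<otimes> b) x = f a (f b x)"
    and one: "\<And>x. x \<in> E \<Longrightarrow> f \<one> x = x"
  shows "card E mod q = card {x\<in>E. \<forall>a\<in>carrier H. f a x = x} mod q"
proof -
  interpret H: group H by (rule grp)
  define \<phi> where "\<phi> = (\<lambda>a. restrict (f a) E)"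
  interpret A: group_action H E \<phi>
    unfolding \<phi>_def by (rule action_from_fun[OF grp cl comp one])
  define Fx where "Fx = {x\<in>E. \<forall>a\<in>carrier H. f a x = x}"
  define NF where "NF = E - Fx"
  define Cs where "Cs = {orbit H \<phi> x | x. x \<in> NF}"
  have orb: "orbit H \<phi> x = {f a x | a. a \<in> carrier H}" if "x \<in> E" for x
    unfolding orbit_def \<phi>_def using that by auto
  have cardorb: "card (orbit H \<phi> x) = q" if x: "x \<in> NF" for x
  proof -
    have xE: "x \<in> E" using x NF_def by auto
    have "card (orbit H \<phi> x) * card (stabilizer H \<phi> x) = q"
      using A.orbit_stabilizer_theorem[OF xE] cardH by simp
    then have d: "card (orbit H \<phi> x) dvd q" by (metis dvd_triv_left)
    obtain a where a: "a \<in> carrier H" "f a x \<noteq> x" using x unfolding NF_def Fx_def using xE by auto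
    have "x \<in> orbit H \<phi> x" using A.orbit_refl xE by auto
    moreover have "f a x \<in> orbit H \<phi> x" using orb[OF xE] a by auto
    moreover have "finite (orbit H \<phi> x)"
      using orb[OF xE] cl xE finE by (auto intro: finite_subset)
    ultimately have "card (orbit H \<phi> x) \<noteq> 1"
      using a(2) by (metis card_1_singletonE singletonD)
    with d pq show ?thesis unfolding prime_nat_iff by blast
  qed
  have sub: "orbit H \<phi> x \<subseteq> NF" if x: "x \<in> NF" for x
  proof
    fix y assume "y \<in> orbit H \<phi> x"
    then obtain a where a: "a \<in> carrier H" "y = f a x" using orb x NF_def by auto
    have xE: "x \<in> E" using x NF_def by auto
    have yE: "y \<in> E" using a cl xE by auto
    have "f (inv a) y = x" using comp[of "inv a" a x] a xE one by auto
    show "y \<in> NF"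
    proof (rule ccontr)
      assume "y \<notin> NF"
      then have "y \<in> Fx" using yE NF_def by auto
      then have "x = y" using \<open>f (inv a) y = x\<close> a Fx_def by auto
      then show False using \<open>y \<in> Fx\<close> x NF_def by auto
    qed
  qed
  have U: "\<Union> Cs = NF"
  proof
    show "\<Union> Cs \<subseteq> NF" using sub Cs_def by auto
    show "NF \<subseteq> \<Union> Cs"
    proof
      fix x assume x: "x \<in> NF"
      then have "x \<in> orbit H \<phi> x" using A.orbit_refl NF_def by auto
      then show "x \<in> \<Union> Cs" using x Cs_def by auto
    qed
  qed
  have finNF: "finite NF" using finE NF_def by auto
  have finCs: "finite Cs"
  proof -
    have "Cs \<subseteq> Pow NF" using sub Cs_def by auto
    then show ?thesis using finNF by (meson finite_Pow_iff finite_subset)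
  qed
  have "q * card Cs = card (\<Union> Cs)"
  proof (rule card_partition[OF finCs])
    show "finite (\<Union> Cs)" using U finNF by simp
    show "card c = q" if "c \<in> Cs" for c using that cardorb Cs_def by auto
    show "c1 \<inter> c2 = {}" if "c1 \<in> Cs" "c2 \<in> Cs" "c1 \<noteq> c2" for c1 c2
    proof -
      have "c1 \<in> orbits H E \<phi>" using that(1) unfolding Cs_def NF_def orbits_def by blast
      moreover have "c2 \<in> orbits H E \<phi>" using that(2) unfolding Cs_def NF_def orbits_def by blast
      ultimately
      show ?thesis using A.disjoint_union that by blast
    qed
  qed
  then have "card NF = q * card Cs" using U by simp
  moreover have "card E = card Fx + card NF"
    using finE NF_def Fx_def by (metis (no_types, lifting) Diff_partition card_Un_disjoint Diff_disjoint finite_Diff2 finite_subset mem_Collect_eq subsetI card_Diff_subset card_mono le_add_diff_inverse)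
  ultimately show ?thesis using Fx_def by simp
qed

context group begin

lemma cancel1 [simp]: "a \<in> carrier G \<Longrightarrow> y \<in> carrier G \<Longrightarrow> a \<otimes> (inv a \<otimes> y) = y"
  by (simp add: m_assoc[symmetric])
lemma cancel2 [simp]: "a \<in> carrier G \<Longrightarrow> y \<in> carrier G \<Longrightarrow> inv a \<otimes> (a \<otimes> y) = y"
  by (simp add: m_assoc[symmetric])

lemma conj_image:
  assumes "g \<in> carrier G" "X \<subseteq> carrier G"
  shows "g <# X #> inv g = (\<lambda>h. g \<otimes> h \<otimes> inv g) ` X"
  using assms unfolding l_coset_def r_coset_def by auto

lemma conj_comp:
  assumes "a \<in> carrier G" "b \<in> carrier G" "X \<subseteq> carrier G"
  shows "(a \<otimes> b) <# X #> inv (a \<otimes> b) = a <# (b <# X #> inv b) #> inv a"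
proof -
  have s: "b <# X #> inv b \<subseteq> carrier G" using assms
    by (auto simp: conj_image)
  have "(\<lambda>h. a \<otimes> h \<otimes> inv a) ` ((\<lambda>h. b \<otimes> h \<otimes> inv b) ` X) = (\<lambda>h. (a \<otimes> b) \<otimes> h \<otimes> inv (a \<otimes> b)) ` X"
    unfolding image_image
    apply (rule image_cong[OF refl])
    using assms by (auto simp: m_assoc inv_mult_group subset_iff)
  then show ?thesis
    using assms s by (simp add: conj_image)
qed

lemma conj_card:
  assumes "g \<in> carrier G" "X \<subseteq> carrier G"
  shows "card (g <# X #> inv g) = card X"
proof -
  have "inj_on (\<lambda>h. g \<otimes> h \<otimes> inv g) X"
    using assms by (auto simp: inj_on_def subset_iff)
  then show ?thesis using assms by (simp add: conj_image card_image)
qed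

lemma conj_self:
  assumes Q: "subgroup Q G" and a: "a \<in> Q"
  shows "a <# Q #> inv a = Q"
proof -
  have aG: "a \<in> carrier G" using subgroup.mem_carrier[OF Q a] .
  have ia: "inv a \<in> Q" using Q a by (rule subgroup.m_inv_closed)
  have "(\<lambda>h. a \<otimes> h \<otimes> inv a) ` Q = Q"
  proof
    show "(\<lambda>h. a \<otimes> h \<otimes> inv a) ` Q \<subseteq> Q"
    proof
      fix z assume "z \<in> (\<lambda>h. a \<otimes> h \<otimes> inv a) ` Q"
      then obtain h where h: "h \<in> Q" "z = a \<otimes> h \<otimes> inv a" by auto
      have ah: "a \<otimes> h \<in> Q" using Q a h(1) by (rule subgroup.m_closed)
      show "z \<in> Q" using subgroup.m_closed[OF Q ah ia] h(2) by simp
    qed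
    show "Q \<subseteq> (\<lambda>h. a \<otimes> h \<otimes> inv a) ` Q"
    proof
      fix y assume y: "y \<in> Q"
      have yG: "y \<in> carrier G" using subgroup.mem_carrier[OF Q y] .
      have "inv a \<otimes> y \<in> Q" using Q ia y by (rule subgroup.m_closed)
      then have "inv a \<otimes> y \<otimes> a \<in> Q" using subgroup.m_closed[OF Q _ a] by blast
      moreover have "a \<otimes> (inv a \<otimes> y \<otimes> a) \<otimes> inv a = y" using aG yG by (simp add: m_assoc)
      ultimately show "y \<in> (\<lambda>h. a \<otimes> h \<otimes> inv a) ` Q" by (metis image_eqI)
    qed
  qed
  then show ?thesis using aG Q by (simp add: conj_image subgroup.subset)
qed

lemma subgroup_prime_inter:
  assumes fin: "finite (carrier G)" and X: "subgroup X G" and Q: "subgroup Q G"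
    and cX: "card X = q" and cQ: "card Q = q" and pq: "prime q" and ne: "X \<noteq> Q"
  shows "X \<inter> Q = {\<one>}"
proof -
  have sI: "subgroup (X \<inter> Q) G" using X Q by (rule subgroups_Inter_pair)
  have "subgroup (X \<inter> Q) (G\<lparr>carrier := X\<rparr>)" using subgroup_incl[OF sI X] by auto
  moreover have "group (G\<lparr>carrier := X\<rparr>)" using X by (rule subgroup_imp_group)
  ultimately have "card (X \<inter> Q) dvd order (G\<lparr>carrier := X\<rparr>)"
    using group.lagrange by (metis dvd_triv_right)
  then have d: "card (X \<inter> Q) dvd q" using cX by (simp add: order_def)
  have finX: "finite X" using fin X by (meson finite_subset subgroup.subset)
  have finQ: "finite Q" using fin Q by (meson finite_subset subgroup.subset)
  show ?thesis
  proof (cases "card (X \<inter> Q) = q")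
    case True
    then have "X \<inter> Q = X" using finX cX by (metis card_subset_eq inf_le1)
    moreover have "X \<inter> Q = Q" using True finQ cQ by (metis card_subset_eq inf_le2)
    ultimately show ?thesis using ne by auto
  next
    case False
    then have "card (X \<inter> Q) = 1" using d pq unfolding prime_nat_iff by blast
    moreover have "\<one> \<in> X \<inter> Q" using X Q by (simp add: subgroup.one_closed)
    ultimately show ?thesis by (metis card_1_singletonE singletonD)
  qed
qed

lemma normalized_prime_eq:
  assumes fin: "finite (carrier G)" and X: "subgroup X G" and Q: "subgroup Q G"
    and cX: "card X = q" and cQ: "card Q = q" and pq: "prime q"
    and nd: "\<not> q^2 dvd order G"
    and nor: "\<forall>a\<in>Q. a <# X #> inv a = X"
  shows "X = Q"
proof (rule ccontr)
  assume ne: "X \<noteq> Q"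
  have I: "X \<inter> Q = {\<one>}" using subgroup_prime_inter[OF fin X Q cX cQ pq ne] .
  have XG: "X \<subseteq> carrier G" and QG: "Q \<subseteq> carrier G" using X Q subgroup.subset by auto
  have cm: "a \<otimes> y \<otimes> inv a \<in> X" if "a \<in> Q" "y \<in> X" for a y
  proof -
    have "a \<otimes> y \<otimes> inv a \<in> a <# X #> inv a"
      using that XG QG by (auto simp: conj_image)
    then show ?thesis using nor that by auto
  qed
  define P where "P = (\<lambda>(x, h). x \<otimes> h) ` (X \<times> Q)"
  have sP: "subgroup P G"
  proof
    show "P \<subseteq> carrier G" using XG QG P_def by auto
    show "\<one> \<in> P" unfolding P_def using X Q
      by (auto intro!: image_eqI[where x="(\<one>, \<one>)"] simp: subgroup.one_closed)
  next
    fix u v assume "u \<in> P" "v \<in> P"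
    then obtain x1 h1 x2 h2 where u: "u = x1 \<otimes> h1" "x1 \<in> X" "h1 \<in> Q"
      and v: "v = x2 \<otimes> h2" "x2 \<in> X" "h2 \<in> Q" unfolding P_def by auto
    have G: "x1 \<in> carrier G" "x2 \<in> carrier G" "h1 \<in> carrier G" "h2 \<in> carrier G"
      using u v XG QG by auto
    have eq: "u \<otimes> v = (x1 \<otimes> (h1 \<otimes> x2 \<otimes> inv h1)) \<otimes> (h1 \<otimes> h2)"
      using G u v by (simp add: m_assoc)
    have "x1 \<otimes> (h1 \<otimes> x2 \<otimes> inv h1) \<in> X" using cm u v X by (simp add: subgroup.m_closed)
    moreover have "h1 \<otimes> h2 \<in> Q" using u v Q by (simp add: subgroup.m_closed)
    ultimately show "u \<otimes> v \<in> P" unfolding P_def using eq by force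
  next
    fix u assume "u \<in> P"
    then obtain x1 h1 where u: "u = x1 \<otimes> h1" "x1 \<in> X" "h1 \<in> Q" unfolding P_def by auto
    have G: "x1 \<in> carrier G" "h1 \<in> carrier G" using u XG QG by auto
    have eq: "inv u = (inv h1 \<otimes> inv x1 \<otimes> inv (inv h1)) \<otimes> inv h1"
      using G u by (simp add: m_assoc inv_mult_group)
    have "inv h1 \<otimes> inv x1 \<otimes> inv (inv h1) \<in> X"
      using cm[of "inv h1" "inv x1"] u X Q by (simp add: subgroup.m_inv_closed)
    moreover have "inv h1 \<in> Q" using u Q by (simp add: subgroup.m_inv_closed)
    ultimately show "inv u \<in> P" unfolding P_def using eq by force
  qed
  have inj: "inj_on (\<lambda>(x, h). x \<otimes> h) (X \<times> Q)"
  proof (rule inj_onI, clarify)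
    fix x1 h1 x2 h2 assume a: "x1 \<in> X" "h1 \<in> Q" "x2 \<in> X" "h2 \<in> Q" "x1 \<otimes> h1 = x2 \<otimes> h2"
    have G: "x1 \<in> carrier G" "x2 \<in> carrier G" "h1 \<in> carrier G" "h2 \<in> carrier G"
      using a XG QG by auto
    have e1: "x1 = x2 \<otimes> h2 \<otimes> inv h1" using inv_solve_right[of x1 "x2 \<otimes> h2" h1] G a(5) by simp
    have "inv x2 \<otimes> x1 = h2 \<otimes> inv h1" using inv_solve_left'[of "h2 \<otimes> inv h1" x2 x1] G e1 by (simp add: m_assoc)
    moreover have "inv x2 \<otimes> x1 \<in> X" using a X by (simp add: subgroup.m_closed subgroup.m_inv_closed)
    moreover have "h2 \<otimes> inv h1 \<in> Q" using a Q by (simp add: subgroup.m_closed subgroup.m_inv_closed)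
    ultimately have "inv x2 \<otimes> x1 = \<one>" using I by auto
    then have "x1 = x2" using inv_solve_left'[of "\<one>" x2 x1] G by simp
    moreover then have "h1 = h2" using a(5) G by simp
    ultimately show "x1 = x2 \<and> h1 = h2" by simp
  qed
  have finX: "finite X" using fin XG by (meson finite_subset)
  have finQ: "finite Q" using fin QG by (meson finite_subset)
  have "card P = q^2" unfolding P_def using card_image[OF inj] cX cQ finX finQ
    by (simp add: card_cartesian_product power2_eq_square)
  moreover have "card P dvd order G" using lagrange[OF sP] unfolding dvd_def by (metis mult.commute)
  ultimately have "q^2 dvd order G" by simp
  with nd show False by blast
qed

end

context group begin

lemma conj_one: "X \<subseteq> carrier G \<Longrightarrow> \<one> <# X #> inv \<one> = X"
  using conj_image[OF one_closed, of X] by (simp add: subset_iff)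

lemma conj_class_count:
  assumes fin: "finite (carrier G)" and Q: "subgroup Q G" and cQ: "card Q = q" and pq: "prime q"
    and nd: "\<not> q^2 dvd order G"
  shows "\<exists>n. n * card {g \<in> carrier G. g <# Q #> inv g = Q} = order G \<and> n mod q = 1"
    and "subgroup {g \<in> carrier G. g <# Q #> inv g = Q} G"
    and "Q \<subseteq> {g \<in> carrier G. g <# Q #> inv g = Q}"
proof -
  define \<phi> where "\<phi> = (\<lambda>g. \<lambda>H \<in> {H. subgroup H G}. g <# H #> inv g)"
  interpret A: group_action G "{H. subgroup H G}" \<phi>
    unfolding \<phi>_def by (rule action_by_conjugation_on_subgroups_set)
  have QS: "Q \<in> {H. subgroup H G}" using Q by simp
  have QG: "Q \<subseteq> carrier G" using Q subgroup.subset by blast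
  have stab: "stabilizer G \<phi> Q = {g \<in> carrier G. g <# Q #> inv g = Q}"
    unfolding stabilizer_def \<phi>_def using QS by simp
  define Orb where "Orb = orbit G \<phi> Q"
  have Orb_eq: "Orb = {g <# Q #> inv g | g. g \<in> carrier G}"
    unfolding Orb_def orbit_def \<phi>_def using QS by simp
  have os: "card Orb * card {g \<in> carrier G. g <# Q #> inv g = Q} = order G"
    using A.orbit_stabilizer_theorem[OF QS] stab Orb_def by simp
  show "subgroup {g \<in> carrier G. g <# Q #> inv g = Q} G"
    using A.stabilizer_subgroup[OF QS] stab by simp
  show "Q \<subseteq> {g \<in> carrier G. g <# Q #> inv g = Q}"
    using conj_self[OF Q] QG by auto
  define H where "H = G\<lparr>carrier := Q\<rparr>"
  have gH: "group H" unfolding H_def using Q by (rule subgroup_imp_group)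
  have oH: "order H = q" unfolding H_def order_def using cQ by simp
  have Osub: "X \<subseteq> carrier G" if "X \<in> Orb" for X
    using that Orb_eq QG by (auto simp: conj_image subset_iff)
  have finO: "finite Orb"
  proof -
    have "Orb \<subseteq> Pow (carrier G)" using Osub by auto
    then show ?thesis using fin by (meson finite_Pow_iff finite_subset)
  qed
  have cl: "a <# X #> inv a \<in> Orb" if aH: "a \<in> carrier H" and XO: "X \<in> Orb" for a X
  proof -
    obtain g where g: "g \<in> carrier G" "X = g <# Q #> inv g" using XO Orb_eq by auto
    have aG: "a \<in> carrier G" using aH H_def QG by auto
    have "a <# X #> inv a = (a \<otimes> g) <# Q #> inv (a \<otimes> g)"
      using conj_comp[OF aG g(1) QG] g(2) by simp
    then show ?thesis using Orb_eq aG g(1) by auto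
  qed
  have comp: "(a \<otimes>\<^bsub>H\<^esub> b) <# X #> inv (a \<otimes>\<^bsub>H\<^esub> b) = a <# (b <# X #> inv b) #> inv a"
    if "a \<in> carrier H" "b \<in> carrier H" "X \<in> Orb" for a b X
    using conj_comp[of a b X] that Osub QG unfolding H_def by auto
  have one: "\<one>\<^bsub>H\<^esub> <# X #> inv \<one>\<^bsub>H\<^esub> = X" if "X \<in> Orb" for X
    using conj_one Osub that unfolding H_def by simp
  have cnt: "card Orb mod q = card {X \<in> Orb. \<forall>a\<in>carrier H. a <# X #> inv a = X} mod q"
    by (rule orbit_count_mod[OF gH oH pq finO, of "\<lambda>a X. a <# X #> inv a"])
       (use cl comp one in auto)
  have fixp: "{X \<in> Orb. \<forall>a\<in>carrier H. a <# X #> inv a = X} = {Q}"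
  proof
    show "{Q} \<subseteq> {X \<in> Orb. \<forall>a\<in>carrier H. a <# X #> inv a = X}"
    proof -
      have e: "Q = \<one> <# Q #> inv \<one>" using conj_one[OF QG] by simp
      have "Q \<in> Orb" unfolding Orb_eq using e one_closed by blast
      moreover have "\<forall>a\<in>carrier H. a <# Q #> inv a = Q" using conj_self[OF Q] H_def by simp
      ultimately show ?thesis by simp
    qed
    show "{X \<in> Orb. \<forall>a\<in>carrier H. a <# X #> inv a = X} \<subseteq> {Q}"
    proof
      fix X assume X: "X \<in> {X \<in> Orb. \<forall>a\<in>carrier H. a <# X #> inv a = X}"
      then obtain g where g: "g \<in> carrier G" "X = g <# Q #> inv g" using Orb_eq by auto
      have sX: "subgroup X G" using A.element_image[OF g(1) QS] g(2) QS unfolding \<phi>_def by auto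
      have cX: "card X = q" using conj_card[OF g(1) QG] g(2) cQ by simp
      have "\<forall>a\<in>Q. a <# X #> inv a = X" using X H_def by simp
      then have "X = Q" using normalized_prime_eq[OF fin sX Q cX cQ pq nd] by simp
      then show "X \<in> {Q}" by simp
    qed
  qed
  have q1: "q > 1" using pq prime_gt_1_nat by blast
  have "card Orb mod q = 1" using cnt fixp q1 by simp
  then show "\<exists>n. n * card {g \<in> carrier G. g <# Q #> inv g = Q} = order G \<and> n mod q = 1"
    using os by blast
qed

end

context group begin

lemma normal_prime_centralized:
  assumes fin: "finite (carrier G)" and P: "subgroup P G" and cP: "card P = p"
    and Q: "subgroup Q G" and cQ: "card Q = q" and pq: "prime q" and lt: "p < q"
    and Pn: "\<forall>g\<in>carrier G. g <# P #> inv g = P"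
  shows "\<forall>a\<in>P. a <# Q #> inv a = Q"
proof -
  have PG: "P \<subseteq> carrier G" using P subgroup.subset by blast
  have QG: "Q \<subseteq> carrier G" using Q subgroup.subset by blast
  define H where "H = G\<lparr>carrier := Q\<rparr>"
  have gH: "group H" unfolding H_def using Q by (rule subgroup_imp_group)
  have oH: "order H = q" unfolding H_def order_def using cQ by simp
  have finP: "finite P" using fin PG finite_subset by blast
  have cl: "b \<otimes> z \<otimes> inv b \<in> P" if "b \<in> carrier H" "z \<in> P" for b z
  proof -
    have bG: "b \<in> carrier G" using that H_def QG by auto
    have "b \<otimes> z \<otimes> inv b \<in> b <# P #> inv b" using bG that(2) PG by (auto simp: conj_image)
    then show ?thesis using Pn bG by simp
  qed
  have comp: "(b \<otimes>\<^bsub>H\<^esub> c) \<otimes> z \<otimes> inv (b \<otimes>\<^bsub>H\<^esub> c) = b \<otimes> (c \<otimes> z \<otimes> inv c) \<otimes> inv b"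
    if "b \<in> carrier H" "c \<in> carrier H" "z \<in> P" for b c z
  proof -
    have G: "b \<in> carrier G" "c \<in> carrier G" "z \<in> carrier G" using that H_def QG PG by auto
    then show ?thesis unfolding H_def by (simp add: m_assoc inv_mult_group)
  qed
  have one: "\<one>\<^bsub>H\<^esub> \<otimes> z \<otimes> inv \<one>\<^bsub>H\<^esub> = z" if "z \<in> P" for z
    using that PG H_def by auto
  have cnt: "card P mod q = card {z \<in> P. \<forall>b\<in>carrier H. b \<otimes> z \<otimes> inv b = z} mod q"
    by (rule orbit_count_mod[OF gH oH pq finP, of "\<lambda>b z. b \<otimes> z \<otimes> inv b"])
       (use cl comp one in auto)
  define F where "F = {z \<in> P. \<forall>b\<in>carrier H. b \<otimes> z \<otimes> inv b = z}"
  have FP: "F \<subseteq> P" unfolding F_def by auto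
  have "card F \<le> p" using card_mono[OF finP FP] cP by simp
  then have "card F = p" using cnt lt cP F_def by simp
  then have FeqP: "F = P" using card_subset_eq[OF finP FP] cP by simp
  show ?thesis
  proof
    fix a assume a: "a \<in> P"
    have aG: "a \<in> carrier G" using a PG by auto
    have com: "a \<otimes> h \<otimes> inv a = h" if h: "h \<in> Q" for h
    proof -
      have hG: "h \<in> carrier G" using h QG by auto
      have "h \<otimes> a \<otimes> inv h = a" using a FeqP h unfolding F_def H_def by auto
      then have "h \<otimes> a = a \<otimes> h" using inv_solve_right'[of a "h \<otimes> a" h] hG aG by simp
      then show ?thesis using inv_solve_right'[of h "a \<otimes> h" a] hG aG by simp
    qed
    have "(\<lambda>h. a \<otimes> h \<otimes> inv a) ` Q = Q" using com by simp
    then show "a <# Q #> inv a = Q" using conj_image[OF aG QG] by simp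
  qed
qed

end

lemma (in group) sub_pow_closed:
  assumes H: "subgroup H G" and a: "a \<in> H"
  shows "a [^] (k::nat) \<in> H"
proof (induction k)
  case 0
  then show ?case using subgroup.one_closed[OF H] by simp
next
  case (Suc k)
  then show ?case using subgroup.m_closed[OF H Suc a] by simp
qed

locale transfer_setup = group G for G (structure) +
  fixes C Q
  assumes finG: "finite (carrier G)" and sC: "subgroup C G" and sQ: "subgroup Q G" and QC: "Q \<subseteq> C"
    and comm: "\<And>a b. a \<in> Q \<Longrightarrow> b \<in> C \<Longrightarrow> a \<otimes> b = b \<otimes> a"
begin

definition "RC = {Q #> c | c. c \<in> C}"
definition "rep T = (SOME c. c \<in> T)"
definition "fac a T = rep T \<otimes> a \<otimes> inv (rep (T #> a))"
definition "QG = G\<lparr>carrier := Q\<rparr>"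
definition "V a = finprod QG (fac a) RC"

lemma CG: "c \<in> C \<Longrightarrow> c \<in> carrier G" by (rule subgroup.mem_carrier[OF sC])
lemma QGs: "Q \<subseteq> carrier G" by (rule subgroup.subset[OF sQ])
lemma QGm: "h \<in> Q \<Longrightarrow> h \<in> carrier G" by (rule subgroup.mem_carrier[OF sQ])

lemma cos_sub: assumes "c \<in> C" shows "Q #> c \<subseteq> C"
proof
  fix z assume "z \<in> Q #> c"
  then obtain h where h: "h \<in> Q" "z = h \<otimes> c" unfolding r_coset_def by auto
  have "h \<in> C" using h QC by auto
  then show "z \<in> C" using h subgroup.m_closed[OF sC _ assms] by simp
qed

lemma rep_props:
  assumes T: "T \<in> RC"
  shows "rep T \<in> T" "rep T \<in> C" "T = Q #> rep T"
proof -
  obtain c where c: "c \<in> C" "T = Q #> c" using T RC_def by auto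
  have "c \<in> T" using c rcos_self[OF CG[OF c(1)] sQ] by simp
  then show r: "rep T \<in> T" unfolding rep_def by (rule someI)
  then show "rep T \<in> C" using cos_sub[OF c(1)] c(2) by auto
  show "T = Q #> rep T" using repr_independence[of "rep T" Q c] r c CG sQ by simp
qed

lemma RC_mult:
  assumes "T \<in> RC" "a \<in> C"
  shows "T #> a \<in> RC"
proof -
  obtain c where c: "c \<in> C" "T = Q #> c" using assms RC_def by auto
  have "T #> a = Q #> (c \<otimes> a)" using c coset_mult_assoc[OF QGs CG[OF c(1)] CG[OF assms(2)]] by simp
  moreover have "c \<otimes> a \<in> C" using c assms subgroup.m_closed[OF sC] by blast
  ultimately show ?thesis unfolding RC_def by blast
qed

lemma RC_sub: "T \<in> RC \<Longrightarrow> T \<subseteq> carrier G"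
  using cos_sub CG unfolding RC_def by blast

lemma RC_bij:
  assumes a: "a \<in> C"
  shows "bij_betw (\<lambda>T. T #> a) RC RC"
proof (rule bij_betwI[where g="\<lambda>T. T #> inv a"])
  have ia: "inv a \<in> C" using a subgroup.m_inv_closed[OF sC] by blast
  have aG: "a \<in> carrier G" using CG a .
  show "(\<lambda>T. T #> a) \<in> RC \<rightarrow> RC" using RC_mult a by auto
  show "(\<lambda>T. T #> inv a) \<in> RC \<rightarrow> RC" using RC_mult ia by auto
  show "T #> a #> inv a = T" if "T \<in> RC" for T
    using coset_mult_assoc[OF RC_sub[OF that] aG inv_closed[OF aG]] RC_sub[OF that] aG by simp
  show "T #> inv a #> a = T" if "T \<in> RC" for T
    using coset_mult_assoc[OF RC_sub[OF that] inv_closed[OF aG] aG] RC_sub[OF that] aG by simp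
qed

lemma fac_in:
  assumes T: "T \<in> RC" and a: "a \<in> C"
  shows "fac a T \<in> Q"
proof -
  have Ta: "T #> a \<in> RC" using RC_mult[OF T a] .
  have rT: "rep T \<in> T" using rep_props[OF T] by simp
  have "rep T \<otimes> a \<in> T #> a" using rT unfolding r_coset_def by auto
  then have "rep T \<otimes> a \<in> Q #> rep (T #> a)" using rep_props(3)[OF Ta] by simp
  then obtain h where h: "h \<in> Q" "rep T \<otimes> a = h \<otimes> rep (T #> a)" unfolding r_coset_def by auto
  have r2: "rep (T #> a) \<in> carrier G" using rep_props(2)[OF Ta] CG by simp
  have "fac a T = h" unfolding fac_def using h r2 QGm[OF h(1)] by (simp add: m_assoc)
  then show ?thesis using h by simp
qed

lemma fac_mult:
  assumes T: "T \<in> RC" and a: "a \<in> C" and b: "b \<in> C"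
  shows "fac (a \<otimes> b) T = fac a T \<otimes> fac b (T #> a)"
proof -
  have Ta: "T #> a \<in> RC" using RC_mult[OF T a] .
  have e: "T #> a #> b = T #> (a \<otimes> b)"
    using coset_mult_assoc[OF RC_sub[OF T] CG[OF a] CG[OF b]] .
  have G: "rep T \<in> carrier G" "rep (T #> a) \<in> carrier G" "rep (T #> (a \<otimes> b)) \<in> carrier G"
    "a \<in> carrier G" "b \<in> carrier G"
    using rep_props(2)[OF T] rep_props(2)[OF Ta] rep_props(2)[OF RC_mult[OF T subgroup.m_closed[OF sC a b]]] CG a b
    by auto
  show ?thesis unfolding fac_def using G e by (simp add: m_assoc)
qed

lemma QG_comm: "comm_group QG"
proof -
  have g: "group QG" unfolding QG_def using sQ by (rule subgroup_imp_group)
  show ?thesis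
    apply (rule group.group_comm_groupI[OF g])
    using comm QC unfolding QG_def by auto
qed

lemma V_in: "a \<in> C \<Longrightarrow> V a \<in> Q"
proof -
  assume a: "a \<in> C"
  interpret QC: comm_group QG by (rule QG_comm)
  have "fac a \<in> RC \<rightarrow> carrier QG" using fac_in a unfolding QG_def by auto
  then have "V a \<in> carrier QG" unfolding V_def by (rule QC.finprod_closed)
  then show ?thesis unfolding QG_def by simp
qed

lemma V_mult:
  assumes a: "a \<in> C" and b: "b \<in> C"
  shows "V (a \<otimes> b) = V a \<otimes> V b"
proof -
  interpret QC: comm_group QG by (rule QG_comm)
  have f1: "fac a \<in> RC \<rightarrow> carrier QG" using fac_in a unfolding QG_def by auto
  have f2: "(\<lambda>T. fac b (T #> a)) \<in> RC \<rightarrow> carrier QG" using fac_in b RC_mult a unfolding QG_def by auto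
  have f3: "fac b \<in> ((\<lambda>T. T #> a) ` RC) \<rightarrow> carrier QG"
    using fac_in b RC_mult a unfolding QG_def by auto
  have "V (a \<otimes> b) = finprod QG (\<lambda>T. fac a T \<otimes>\<^bsub>QG\<^esub> fac b (T #> a)) RC"
    unfolding V_def
    apply (rule QC.finprod_cong')
      apply simp
    using f1 f2 apply (auto simp: Pi_def QG_def intro!: QC.m_closed[unfolded QG_def, simplified])[1]
    using fac_mult a b unfolding QG_def by simp
  also have "\<dots> = finprod QG (fac a) RC \<otimes>\<^bsub>QG\<^esub> finprod QG (\<lambda>T. fac b (T #> a)) RC"
    by (rule QC.finprod_multf[OF f1 f2])
  also have "finprod QG (\<lambda>T. fac b (T #> a)) RC = finprod QG (fac b) ((\<lambda>T. T #> a) ` RC)"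
    using QC.finprod_reindex[OF f3] bij_betw_imp_inj_on[OF RC_bij[OF a]] by simp
  also have "(\<lambda>T. T #> a) ` RC = RC" using bij_betw_imp_surj_on[OF RC_bij[OF a]] .
  finally show ?thesis unfolding V_def QG_def by simp
qed

lemma V_Q:
  assumes h: "h \<in> Q"
  shows "V h = h [^] card RC"
proof -
  interpret QC: comm_group QG by (rule QG_comm)
  have hG: "h \<in> carrier G" using QGm h .
  have fh: "fac h T = h" if T: "T \<in> RC" for T
  proof -
    have rC: "rep T \<in> C" using rep_props(2)[OF T] .
    have rG: "rep T \<in> carrier G" using CG rC .
    have "T #> h = Q #> (rep T \<otimes> h)"
      using rep_props(3)[OF T] coset_mult_assoc[OF QGs rG hG] by simp
    also have "rep T \<otimes> h = h \<otimes> rep T" using comm[OF h rC] by simp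
    also have "Q #> (h \<otimes> rep T) = (Q #> h) #> rep T" using coset_mult_assoc[OF QGs hG rG] by simp
    also have "Q #> h = Q" using subgroup.rcos_const[OF sQ is_group h] .
    finally have "T #> h = T" using rep_props(3)[OF T] by simp
    then have "fac h T = rep T \<otimes> h \<otimes> inv (rep T)" unfolding fac_def by simp
    also have "\<dots> = h \<otimes> rep T \<otimes> inv (rep T)" using comm[OF h rC] by simp
    also have "\<dots> = h" using rG hG by (simp add: m_assoc)
    finally show ?thesis .
  qed
  have "V h = finprod QG (\<lambda>T. h) RC"
    unfolding V_def
    apply (rule QC.finprod_cong')
    using fh h unfolding QG_def by auto
  also have "\<dots> = h [^]\<^bsub>QG\<^esub> card RC" using QC.finprod_const h unfolding QG_def by simp
  also have "\<dots> = h [^] card RC" unfolding QG_def by (simp add: nat_pow_consistent[symmetric])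
  finally show ?thesis .
qed

lemma card_RC: "card RC * card Q = card C"
proof -
  define CC where "CC = G\<lparr>carrier := C\<rparr>"
  have gC: "group CC" unfolding CC_def using sC by (rule subgroup_imp_group)
  have sQC: "subgroup Q CC" unfolding CC_def using subgroup_incl[OF sQ sC QC] .
  have "rcosets\<^bsub>CC\<^esub> Q = RC"
    unfolding RCOSETS_def RC_def CC_def r_coset_def by auto
  moreover have "card (rcosets\<^bsub>CC\<^esub> Q) * card Q = order CC" using group.lagrange[OF gC sQC] .
  ultimately show ?thesis unfolding CC_def order_def by simp
qed

lemma V_one: "V \<one> = \<one>"
proof -
  have o: "\<one> \<in> C" using subgroup.one_closed[OF sC] .
  have "V \<one> = V \<one> \<otimes> V \<one>" using V_mult[OF o o] by simp
  moreover have "V \<one> \<in> carrier G" using V_in[OF o] QGm by simp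
  ultimately show ?thesis by (metis l_cancel_one' one_closed r_one)
qed

lemma V_pow:
  assumes a: "a \<in> C"
  shows "V (a [^] (k::nat)) = V a [^] k"
proof (induction k)
  case 0
  then show ?case using V_one by simp
next
  case (Suc k)
  have ak: "a [^] k \<in> C" using sub_pow_closed[OF sC a] .
  have "V (a [^] Suc k) = V (a [^] k \<otimes> a)" by simp
  also have "\<dots> = V (a [^] k) \<otimes> V a" using V_mult[OF ak a] .
  finally show ?case using Suc by simp
qed

end

context transfer_setup begin

lemma pow_card_RC_in_Q:
  assumes c: "c \<in> C"
  shows "c [^] card RC \<in> Q"
proof -
  define CC where "CC = G\<lparr>carrier := C\<rparr>"
  have gC: "group CC" unfolding CC_def using sC by (rule subgroup_imp_group)
  have sQC: "subgroup Q CC" unfolding CC_def using subgroup_incl[OF sQ sC QC] .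
  have rc: "r_coset CC = r_coset G" unfolding CC_def r_coset_def by (simp add: fun_eq_iff)
  have lc: "l_coset CC = l_coset G" unfolding CC_def l_coset_def by (simp add: fun_eq_iff)
  have nQ: "Q \<lhd> CC"
  proof (rule group.normalI[OF gC sQC], rule ballI)
    fix x assume x: "x \<in> carrier CC"
    then have xC: "x \<in> C" unfolding CC_def by simp
    have "Q #> x = x <# Q"
    proof
      show "Q #> x \<subseteq> x <# Q"
      proof
        fix z assume "z \<in> Q #> x"
        then obtain h where h: "h \<in> Q" "z = h \<otimes> x" unfolding r_coset_def by auto
        then have "z = x \<otimes> h" using comm[OF h(1) xC] by simp
        then show "z \<in> x <# Q" using h(1) unfolding l_coset_def by auto
      qed
      show "x <# Q \<subseteq> Q #> x"
      proof
        fix z assume "z \<in> x <# Q"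
        then obtain h where h: "h \<in> Q" "z = x \<otimes> h" unfolding l_coset_def by auto
        then have "z = h \<otimes> x" using comm[OF h(1) xC] by simp
        then show "z \<in> Q #> x" using h(1) unfolding r_coset_def by auto
      qed
    qed
    then show "Q #>\<^bsub>CC\<^esub> x = x <#\<^bsub>CC\<^esub> Q" using rc lc by simp
  qed
  have RCeq: "rcosets\<^bsub>CC\<^esub> Q = RC"
    unfolding RCOSETS_def RC_def CC_def r_coset_def by auto
  have gM: "group (CC Mod Q)" using normal.factorgroup_is_group[OF nQ] .
  have oM: "order (CC Mod Q) = card RC" unfolding order_def FactGroup_def using RCeq by simp
  have cCC: "c \<in> carrier CC" unfolding CC_def using c by simp
  have el: "Q #>\<^bsub>CC\<^esub> c \<in> carrier (CC Mod Q)"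
    unfolding FactGroup_def using group.rcosetsI[OF gC] sQC cCC subgroup.subset[OF sQC] by auto
  have "(Q #>\<^bsub>CC\<^esub> c) [^]\<^bsub>CC Mod Q\<^esub> card RC = Q"
    using group.pow_order_eq_1[OF gM el] oM by simp
  moreover have "Q #>\<^bsub>CC\<^esub> (c [^]\<^bsub>CC\<^esub> card RC) = (Q #>\<^bsub>CC\<^esub> c) [^]\<^bsub>CC Mod Q\<^esub> card RC"
    using hom_nat_pow[OF normal.r_coset_hom_Mod[OF nQ] cCC gC gM] .
  moreover have "c [^]\<^bsub>CC\<^esub> card RC = c [^] card RC"
    unfolding CC_def by (simp add: nat_pow_consistent[symmetric])
  ultimately have "Q #> (c [^] card RC) = Q" using rc by simp
  moreover have "c [^] card RC \<in> Q #> (c [^] card RC)"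
    using rcos_self[OF _ sQ] CG[OF c] by simp
  ultimately show ?thesis by simp
qed

end

context group begin

lemma comm_pow:
  assumes c: "c \<in> carrier G" and g: "g \<in> carrier G" and cg: "c \<otimes> g = g \<otimes> c"
  shows "c \<otimes> g [^] (k::nat) = g [^] k \<otimes> c"
proof (induction k)
  case 0
  then show ?case using c by simp
next
  case (Suc k)
  have gk: "g [^] k \<in> carrier G" using g by simp
  have "c \<otimes> g [^] Suc k = (c \<otimes> g [^] k) \<otimes> g" using c g gk by (simp add: m_assoc)
  also have "\<dots> = g [^] k \<otimes> (c \<otimes> g)" using Suc c g gk by (simp add: m_assoc)
  also have "\<dots> = g [^] Suc k \<otimes> c" using cg c g gk by (simp add: m_assoc)
  finally show ?case .
qed

lemma conj_pow:
  assumes s: "s \<in> carrier G" and x: "x \<in> carrier G"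
  shows "(s \<otimes> x \<otimes> inv s) [^] (k::nat) = s \<otimes> x [^] k \<otimes> inv s"
proof (induction k)
  case 0
  then show ?case using s by simp
next
  case (Suc k)
  then show ?case using s x by (simp add: m_assoc)
qed

lemma invol_cancel:
  assumes a: "a \<in> carrier G" "a \<otimes> a = \<one>" and y: "y \<in> carrier G"
  shows "a \<otimes> (a \<otimes> y) = y"
  using a y by (simp add: m_assoc[symmetric])

lemma invol_inv:
  assumes a: "a \<in> carrier G" "a \<otimes> a = \<one>"
  shows "inv a = a"
  using inv_equality[OF a(2) a(1) a(1)] .

lemma main_group_lemma:
  assumes fin: "finite (carrier G)"
    and AG: "A \<subseteq> carrier G" and Ainv: "\<forall>a\<in>A. a \<otimes> a = \<one>" and gen: "generate G A = carrier G"
    and prods: "\<forall>a\<in>A. \<forall>b\<in>A. \<exists>k. (a \<otimes> b) [^] (k::nat) = \<one> \<and> \<not> q dvd k"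
    and g: "g \<in> carrier G" and og: "ord g = q" and pq: "prime q" and q2: "q \<noteq> 2"
    and nrm: "\<forall>s\<in>carrier G. s \<otimes> g \<otimes> inv s \<in> generate G {g}"
    and nd: "\<not> q^2 dvd order G"
  shows False
proof -
  have n2: "\<not> q dvd 2"
  proof
    assume "q dvd 2"
    then have "q \<le> 2" by (rule dvd_imp_le) simp
    moreover have "q > 1" using prime_gt_1_nat[OF pq] .
    ultimately show False using q2 by simp
  qed
  define Q where "Q = generate G {g}"
  have Qeq: "Q = {g [^] k | k. k \<in> (UNIV :: nat set)}"
    unfolding Q_def using generate_pow_on_finite_carrier[OF fin g] .
  have sQ: "subgroup Q G" unfolding Q_def using generate_is_subgroup g by simp
  have cQ: "card Q = q" unfolding Q_def using generate_pow_card[OF g] og by simp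
  have "g [^] (1::nat) \<in> Q" unfolding Qeq by blast
  then have gQ: "g \<in> Q" using g by simp
  define C where "C = {c \<in> carrier G. c \<otimes> g = g \<otimes> c}"
  have sC: "subgroup C G"
  proof (rule subgroupI)
    show "C \<subseteq> carrier G" unfolding C_def by auto
    show "C \<noteq> {}" unfolding C_def using g by (auto intro!: exI[of _ \<one>])
  next
    fix a assume "a \<in> C"
    then have a: "a \<in> carrier G" "a \<otimes> g = g \<otimes> a" unfolding C_def by auto
    have "inv a \<otimes> g = inv a \<otimes> (g \<otimes> a) \<otimes> inv a" using a(1) g by (simp add: m_assoc)
    also have "\<dots> = inv a \<otimes> (a \<otimes> g) \<otimes> inv a" using a(2) by simp
    also have "\<dots> = g \<otimes> inv a" using a(1) g by (simp add: m_assoc)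
    finally show "inv a \<in> C" unfolding C_def using a by simp
  next
    fix a b assume "a \<in> C" "b \<in> C"
    then have a: "a \<in> carrier G" "a \<otimes> g = g \<otimes> a" and b: "b \<in> carrier G" "b \<otimes> g = g \<otimes> b"
      unfolding C_def by auto
    have "a \<otimes> b \<otimes> g = a \<otimes> (b \<otimes> g)" using a(1) b(1) g by (simp add: m_assoc)
    also have "\<dots> = (a \<otimes> g) \<otimes> b" using a(1) b g by (simp add: m_assoc)
    also have "\<dots> = g \<otimes> (a \<otimes> b)" using a b(1) g by (simp add: m_assoc)
    finally show "a \<otimes> b \<in> C" unfolding C_def using a b by simp
  qed
  have comm: "a \<otimes> b = b \<otimes> a" if a: "a \<in> Q" and b: "b \<in> C" for a b
  proof -
    obtain k where k: "a = g [^] (k::nat)" using a Qeq by auto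
    have "b \<otimes> g [^] k = g [^] k \<otimes> b" using comm_pow[of b g k] b g unfolding C_def by auto
    then show ?thesis using k by simp
  qed
  have QC: "Q \<subseteq> C"
  proof
    fix a assume a: "a \<in> Q"
    then obtain k where k: "a = g [^] (k::nat)" using Qeq by auto
    have "g \<otimes> g [^] k = g [^] k \<otimes> g" using comm_pow[of g g k] g by simp
    then show "a \<in> C" unfolding C_def using k g by simp
  qed
  interpret T: transfer_setup G C Q
    by (rule transfer_setup.intro[OF is_group], rule transfer_setup_axioms.intro[OF fin sC sQ QC comm])
  define n where "n = card T.RC"
  have ndq: "\<not> q dvd n"
  proof
    assume "q dvd n"
    then obtain j where j: "n = q * j" by auto
    have "card C dvd order G" using lagrange[OF sC] unfolding dvd_def by (metis mult.commute)
    moreover have "card C = q^2 * j" using T.card_RC j cQ n_def by (simp add: power2_eq_square mult.commute mult.left_commute)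
    ultimately have "q^2 dvd order G" by (metis dvd_mult_left)
    then show False using nd by simp
  qed
  have Qtriv: "z = \<one>" if z: "z \<in> Q" and zk: "z [^] (k::nat) = \<one>" and nk: "\<not> q dvd k" for z k
  proof -
    obtain j where j: "z = g [^] (j::nat)" using z Qeq by auto
    have zG: "z \<in> carrier G" using j g by simp
    have "z [^] q = \<one>"
    proof -
      have "z [^] q = g [^] (j * q)" using j g by (simp add: nat_pow_pow)
      also have "\<dots> = (g [^] q) [^] j" using g by (simp add: nat_pow_pow mult.commute)
      also have "g [^] q = \<one>" using og g pow_ord_eq_1 by blast
      finally show ?thesis by simp
    qed
    then have d1: "ord z dvd q" using pow_eq_id[OF zG] by simp
    have d2: "ord z dvd k" using pow_eq_id[OF zG] zk by simp
    have "ord z = 1 \<or> ord z = q" using d1 pq unfolding prime_nat_iff by blast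
    then have "ord z = 1" using d2 nk by auto
    then show ?thesis using ord_eq_1[OF zG] by simp
  qed
  have LemB: "T.V u = \<one>" if u: "u \<in> C" and uk: "u [^] (k::nat) = \<one>" and nk: "\<not> q dvd k" for u k
  proof -
    have "T.V u [^] k = T.V (u [^] k)" using T.V_pow[OF u] by simp
    also have "\<dots> = \<one>" using uk T.V_one by simp
    finally show ?thesis using Qtriv[OF T.V_in[OF u] _ nk] by simp
  qed
  have Vg: "T.V g \<noteq> \<one>"
  proof
    assume "T.V g = \<one>"
    then have "g [^] n = \<one>" using T.V_Q[OF gQ] n_def by simp
    then have "q dvd n" using pow_eq_id[OF g] og by simp
    then show False using ndq by simp
  qed
  define K where "K = {c \<in> C. T.V c = \<one>}"
  have CG: "c \<in> carrier G" if "c \<in> C" for c using that C_def by simp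
  have Kchar: "T.V c = \<one> \<longleftrightarrow> c [^] n = \<one>" if c: "c \<in> C" for c
  proof
    assume V1: "T.V c = \<one>"
    define z where "z = c [^] n"
    have zQ: "z \<in> Q" using T.pow_card_RC_in_Q[OF c] z_def n_def by simp
    have "T.V z = z [^] n" using T.V_Q[OF zQ] n_def by simp
    moreover have "T.V z = \<one>" using T.V_pow[OF c] V1 z_def by simp
    ultimately have "z [^] n = \<one>" by simp
    then have "z = \<one>" using Qtriv[OF zQ _ ndq] by simp
    then show "c [^] n = \<one>" using z_def by simp
  next
    assume "c [^] n = \<one>"
    then show "T.V c = \<one>" using LemB[OF c _ ndq] by simp
  qed
  have Cnorm: "s \<otimes> c \<otimes> inv s \<in> C" if s: "s \<in> carrier G" and c: "c \<in> C" for s c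
  proof -
    have cG: "c \<in> carrier G" using CG c .
    define g' where "g' = inv s \<otimes> g \<otimes> s"
    have "inv s \<otimes> g \<otimes> inv (inv s) \<in> Q" using nrm inv_closed[OF s] unfolding Q_def by blast
    then have g'Q: "g' \<in> Q" unfolding g'_def using s by simp
    have g'G: "g' \<in> carrier G" using g'_def s g by simp
    have e: "g = s \<otimes> g' \<otimes> inv s" unfolding g'_def using s g by (simp add: m_assoc)
    have cg': "c \<otimes> g' = g' \<otimes> c" using comm[OF g'Q c] by simp
    have cg'2: "c \<otimes> (g' \<otimes> inv s) = g' \<otimes> (c \<otimes> inv s)"
      using cg' cG g'G s by (simp add: m_assoc[symmetric])
    have "(s \<otimes> c \<otimes> inv s) \<otimes> (s \<otimes> g' \<otimes> inv s) = (s \<otimes> g' \<otimes> inv s) \<otimes> (s \<otimes> c \<otimes> inv s)"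
      using cg'2 cG g'G s by (simp add: m_assoc)
    then have "(s \<otimes> c \<otimes> inv s) \<otimes> g = g \<otimes> (s \<otimes> c \<otimes> inv s)" using e by simp
    then show ?thesis unfolding C_def using s cG by simp
  qed
  have Kconj: "s \<otimes> c \<otimes> inv s \<in> K" if s: "s \<in> carrier G" and c: "c \<in> K" for s c
  proof -
    have cC: "c \<in> C" using c K_def by simp
    have cG: "c \<in> carrier G" using CG cC .
    have sc: "s \<otimes> c \<otimes> inv s \<in> C" using Cnorm[OF s cC] .
    have "c [^] n = \<one>" using Kchar[OF cC] c K_def by simp
    then have "(s \<otimes> c \<otimes> inv s) [^] n = \<one>" using conj_pow[OF s cG] s by simp
    then show ?thesis using Kchar[OF sc] sc K_def by simp
  qed
  have sK: "subgroup K G"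
  proof (rule subgroupI)
    show "K \<subseteq> carrier G" using K_def CG by auto
    show "K \<noteq> {}" using K_def T.V_one subgroup.one_closed[OF sC] by auto
  next
    fix a assume a: "a \<in> K"
    have aC: "a \<in> C" using a K_def by simp
    have iaC: "inv a \<in> C" using subgroup.m_inv_closed[OF sC aC] .
    have "T.V (a \<otimes> inv a) = T.V a \<otimes> T.V (inv a)" using T.V_mult[OF aC iaC] .
    moreover have "T.V (a \<otimes> inv a) = \<one>" using CG[OF aC] T.V_one by simp
    moreover have "T.V (inv a) \<in> carrier G" using T.V_in[OF iaC] T.QGm by simp
    moreover have "T.V a = \<one>" using a K_def by simp
    ultimately have "T.V (inv a) = \<one>" by simp
    then show "inv a \<in> K" using iaC K_def by simp
  next
    fix a b assume a: "a \<in> K" and b: "b \<in> K"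
    then have "a \<in> C" "b \<in> C" using K_def by auto
    then show "a \<otimes> b \<in> K" using T.V_mult a b K_def subgroup.m_closed[OF sC] by simp
  qed
  have dich: "s \<in> C \<or> s \<otimes> g \<otimes> s = inv g" if sA: "s \<in> A" for s
  proof -
    have s: "s \<in> carrier G" using sA AG by auto
    have ss: "s \<otimes> s = \<one>" using sA Ainv by auto
    have isv: "inv s = s" using invol_inv[OF s ss] .
    obtain k where k: "s \<otimes> g \<otimes> s = g [^] (k::nat)"
      using nrm s isv unfolding Q_def[symmetric] Qeq by force
    have "(s \<otimes> g \<otimes> inv s) [^] k = s \<otimes> g [^] k \<otimes> inv s" using conj_pow[OF s g] .
    then have "(g [^] k) [^] k = s \<otimes> (s \<otimes> g \<otimes> s) \<otimes> s" using k isv by simp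
    also have "\<dots> = g" using s g ss by (simp add: m_assoc invol_cancel)
    finally have gkk: "g [^] (k * k) = g" using g by (simp add: nat_pow_pow)
    have k0: "k \<noteq> 0"
    proof
      assume "k = 0"
      then have "g = \<one>" using gkk by simp
      then have "q = 1" using og by simp
      then show False using pq by simp
    qed
    have "g [^] (k * k) = g [^] (1::nat)" using gkk g by simp
    then have "g [^] (k * k - 1) = \<one>" using pow_eq_div2[OF g] by blast
    then have "q dvd (k * k - 1)" using pow_eq_id[OF g] og by simp
    moreover have "k * k - 1 = (k - 1) * (k + 1)" using k0 by (simp add: algebra_simps)
    ultimately have "q dvd (k - 1) * (k + 1)" by simp
    then have "q dvd (k - 1) \<or> q dvd (k + 1)" using pq prime_dvd_mult_nat by blast
    then show ?thesis
    proof
      assume "q dvd (k - 1)"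
      then have "g [^] (k - 1) = \<one>" using pow_eq_id[OF g, of "k - 1"] og by simp
      moreover have "g [^] k = g [^] (k - 1) \<otimes> g" using k0 g by (metis Suc_pred' nat_pow_Suc neq0_conv)
      ultimately have "s \<otimes> g \<otimes> s = g" using k g by simp
      then have "s \<otimes> g \<otimes> s \<otimes> s = g \<otimes> s" by simp
      then have "s \<otimes> g = g \<otimes> s" using s g ss by (simp add: m_assoc)
      then show ?thesis unfolding C_def using s by simp
    next
      assume "q dvd (k + 1)"
      then have "g [^] k \<otimes> g = \<one>" using pow_eq_id[OF g, of "k+1"] og g by simp
      then have "inv g = g [^] k" using inv_equality g by simp
      then show ?thesis using k by simp
    qed
  qed
  have pairC: "s \<otimes> u \<in> C" if sA: "s \<in> A" and uA: "u \<in> A" and sC': "s \<notin> C" and uC': "u \<notin> C" for s u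
  proof -
    have s: "s \<in> carrier G" and u: "u \<in> carrier G" using sA uA AG by auto
    have ss: "s \<otimes> s = \<one>" and uu: "u \<otimes> u = \<one>" using sA uA Ainv by auto
    have es: "s \<otimes> g \<otimes> s = inv g" using dich[OF sA] sC' by simp
    have eu: "u \<otimes> g \<otimes> u = inv g" using dich[OF uA] uC' by simp
    have ug: "u \<otimes> g = inv g \<otimes> u"
    proof -
      have "u \<otimes> g \<otimes> u \<otimes> u = inv g \<otimes> u" using eu by simp
      then show ?thesis using u g uu by (simp add: m_assoc)
    qed
    have gs: "g \<otimes> s = s \<otimes> inv g"
    proof -
      have "s \<otimes> (s \<otimes> g \<otimes> s) = s \<otimes> inv g" using es by simp
      then show ?thesis using s g ss by (simp add: m_assoc invol_cancel)
    qed
    have "s \<otimes> u \<otimes> g = s \<otimes> (u \<otimes> g)" using s u g by (simp add: m_assoc)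
    also have "\<dots> = s \<otimes> inv g \<otimes> u" using ug s u g by (simp add: m_assoc)
    also have "\<dots> = g \<otimes> s \<otimes> u" using gs by simp
    finally show ?thesis unfolding C_def using s u g by (simp add: m_assoc)
  qed
  show False
  proof (cases "A \<subseteq> C")
    case True
    have "A \<subseteq> K"
    proof
      fix a assume aA: "a \<in> A"
      have aC: "a \<in> C" using True aA by auto
      have "a [^] (2::nat) = \<one>" using aA Ainv AG by (auto simp: numeral_2_eq_2)
      moreover note n2
      ultimately have "T.V a = \<one>" using LemB[OF aC] by blast
      then show "a \<in> K" using aC K_def by simp
    qed
    then have "generate G A \<subseteq> K" using generate_subgroup_incl[OF _ sK] by simp
    then have "g \<in> K" using gen g by auto
    then show False using Vg K_def by simp
  next
    case False
    then obtain s where sA: "s \<in> A" and sC': "s \<notin> C" by auto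
    have s: "s \<in> carrier G" using sA AG by auto
    have ss: "s \<otimes> s = \<one>" using sA Ainv by auto
    have isv: "inv s = s" using invol_inv[OF s ss] .
    define S where "S = K \<union> (\<lambda>k. s \<otimes> k) ` K"
    have KG: "k \<in> carrier G" if "k \<in> K" for k using that K_def CG by auto
    have Kc: "s \<otimes> k \<otimes> s \<in> K" if "k \<in> K" for k using Kconj[OF s that] isv by simp
    have sS: "subgroup S G"
    proof (rule subgroupI)
      show "S \<subseteq> carrier G" unfolding S_def using KG s by auto
      show "S \<noteq> {}" unfolding S_def using sK subgroup.one_closed by blast
    next
      fix a assume "a \<in> S"
      then show "inv a \<in> S"
      proof (cases "a \<in> K")
        case True
        then show ?thesis unfolding S_def using subgroup.m_inv_closed[OF sK] by blast
      next
        case False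
        then obtain k where k: "k \<in> K" "a = s \<otimes> k" using \<open>a \<in> S\<close> S_def by auto
        have ik: "inv k \<in> K" using subgroup.m_inv_closed[OF sK k(1)] .
        have "inv a = s \<otimes> (s \<otimes> inv k \<otimes> s)"
          using k s KG[OF k(1)] ss isv by (simp add: inv_mult_group m_assoc invol_cancel)
        then show ?thesis unfolding S_def using Kc[OF ik] by blast
      qed
    next
      fix a b assume a: "a \<in> S" and b: "b \<in> S"
      show "a \<otimes> b \<in> S"
      proof (cases "a \<in> K")
        case aK: True
        show ?thesis
        proof (cases "b \<in> K")
          case True
          then show ?thesis unfolding S_def using subgroup.m_closed[OF sK aK] by blast
        next
          case False
          then obtain k where k: "k \<in> K" "b = s \<otimes> k" using b S_def by auto
          have "a \<otimes> b = s \<otimes> ((s \<otimes> a \<otimes> s) \<otimes> k)"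
            using k s KG[OF k(1)] KG[OF aK] ss by (simp add: m_assoc invol_cancel)
          moreover have "(s \<otimes> a \<otimes> s) \<otimes> k \<in> K" using subgroup.m_closed[OF sK Kc[OF aK] k(1)] .
          ultimately show ?thesis unfolding S_def by blast
        qed
      next
        case aK: False
        then obtain k1 where k1: "k1 \<in> K" "a = s \<otimes> k1" using a S_def by auto
        show ?thesis
        proof (cases "b \<in> K")
          case True
          have "a \<otimes> b = s \<otimes> (k1 \<otimes> b)" using k1 s KG[OF k1(1)] KG[OF True] by (simp add: m_assoc)
          then show ?thesis unfolding S_def using subgroup.m_closed[OF sK k1(1) True] by blast
        next
          case False
          then obtain k where k: "k \<in> K" "b = s \<otimes> k" using b S_def by auto
          have "a \<otimes> b = (s \<otimes> k1 \<otimes> s) \<otimes> k"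
            using k k1 s KG[OF k(1)] KG[OF k1(1)] by (simp add: m_assoc)
          then show ?thesis unfolding S_def using subgroup.m_closed[OF sK Kc[OF k1(1)] k(1)] by simp
        qed
      qed
    qed
    have AS: "A \<subseteq> S"
    proof
      fix a assume aA: "a \<in> A"
      have aG: "a \<in> carrier G" using aA AG by auto
      show "a \<in> S"
      proof (cases "a \<in> C")
        case True
        have "a [^] (2::nat) = \<one>" using aA Ainv AG by (auto simp: numeral_2_eq_2)
        moreover note n2
        ultimately have "T.V a = \<one>" using LemB[OF True] by blast
        then show "a \<in> S" using True K_def S_def by simp
      next
        case False
        have saC: "s \<otimes> a \<in> C" using pairC[OF sA aA sC' False] .
        obtain k where "(s \<otimes> a) [^] (k::nat) = \<one>" "\<not> q dvd k" using prods sA aA by blast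
        then have "T.V (s \<otimes> a) = \<one>" using LemB[OF saC] by blast
        then have "s \<otimes> a \<in> K" using saC K_def by simp
        moreover have "a = s \<otimes> (s \<otimes> a)" using invol_cancel[OF s ss aG] by simp
        ultimately show "a \<in> S" unfolding S_def by blast
      qed
    qed
    have "generate G A \<subseteq> S" using generate_subgroup_incl[OF AS sS] .
    then have gS: "g \<in> S" using gen g by auto
    have "g \<notin> K" using Vg K_def by simp
    then obtain k where k: "k \<in> K" "g = s \<otimes> k" using gS S_def by auto
    have gC: "g \<in> C" using QC gQ by auto
    have kC: "k \<in> C" using k K_def by simp
    have "s = g \<otimes> inv k" using k s KG[OF k(1)] by (simp add: m_assoc)
    moreover have "g \<otimes> inv k \<in> C" using subgroup.m_closed[OF sC gC subgroup.m_inv_closed[OF sC kC]] .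
    ultimately show False using sC' by simp
  qed
qed

end

lemma nt_contra:
  fixes p q m d c e c' :: nat
  assumes pq: "p < q" and m84: "m \<le> 84" and qb: "14112 < q" and m0: "m > 0" and p1: "p > 1"
    and dc: "d * c = m" and pd: "(p * d) mod q = 1"
    and ec: "e * c' = m" and qe: "(q * e) mod p = 1"
  shows False
proof -
  have c0: "c > 0" using dc m0 by (cases c) auto
  have c'0: "c' > 0" using ec m0 by (cases c') auto
  have e0: "e > 0" using ec m0 by (cases e) auto
  have "d \<le> d * c" using c0 by simp
  then have dm: "d \<le> 84" using dc m84 by simp
  have "e \<le> e * c'" using c'0 by simp
  then have em: "e \<le> 84" using ec m84 by simp
  define k where "k = (p * d) div q"
  have pdk: "p * d = k * q + 1" using pd k_def div_mult_mod_eq[of "p * d" q] by simp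
  define u where "u = (q * e) div p"
  have qeu: "q * e = u * p + 1" using qe u_def div_mult_mod_eq[of "q * e" p] by simp
  have "e * (p * d) = e * k * q + e" using pdk by (simp add: algebra_simps)
  also have "\<dots> = k * (q * e) + e" by (simp add: algebra_simps)
  also have "\<dots> = k * u * p + (k + e)" using qeu by (simp add: algebra_simps)
  finally have eq: "e * (p * d) = k * u * p + (k + e)" .
  have "p dvd e * (p * d)" by simp
  then have "p dvd k * u * p + (k + e)" using eq by simp
  then have "p dvd (k + e)" by (simp add: dvd_add_right_iff)
  then have pke: "p \<le> k + e" using e0 by (simp add: dvd_imp_le)
  have "k * q < p * d" using pdk by simp
  also have "p * d \<le> q * d" using pq by simp
  finally have "k * q < d * q" by (simp add: mult.commute)
  then have "k < d" by simp
  then have p167: "p \<le> 167" using pke dm em by linarith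
  have "q + 1 \<le> p * d"
  proof -
    have "k \<noteq> 0"
    proof
      assume "k = 0"
      then have "p * d = 1" using pdk by simp
      then show False using p1 by simp
    qed
    then have "q \<le> k * q" by simp
    then show ?thesis using pdk by simp
  qed
  moreover have "p * d \<le> 167 * 84" using mult_le_mono[OF p167 dm] by simp
  ultimately show False using qb by simp
qed

context group begin

lemma sub_card_dvd:
  assumes "subgroup H G" "subgroup K G" "H \<subseteq> K"
  shows "card H dvd card K"
proof -
  have s: "subgroup H (G\<lparr>carrier := K\<rparr>)" using subgroup_incl[OF assms] .
  have g: "group (G\<lparr>carrier := K\<rparr>)" using subgroup_imp_group[OF assms(2)] .
  have "card (rcosets\<^bsub>G\<lparr>carrier := K\<rparr>\<^esub> H) * card H = order (G\<lparr>carrier := K\<rparr>)"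
    using group.lagrange[OF g s] .
  then have "card (rcosets\<^bsub>G\<lparr>carrier := K\<rparr>\<^esub> H) * card H = card K" unfolding order_def by simp
  then show ?thesis by (metis dvd_triv_right)
qed

lemma all_conj_eq:
  assumes fin: "finite (carrier G)" and N: "N \<subseteq> carrier G" and "card N = order G"
  shows "N = carrier G"
  using assms card_subset_eq unfolding order_def by blast

lemma big_q_normal:
  assumes fin: "finite (carrier G)" and oG: "order G = p * q * m"
    and pp: "prime p" and pq: "prime q" and lt: "p < q" and m84: "m \<le> 84" and qb: "14112 < q"
  shows "\<exists>Q. subgroup Q G \<and> card Q = q \<and> (\<forall>s\<in>carrier G. s <# Q #> inv s = Q)"
proof -
  have o0: "order G > 0" using fin order_gt_0_iff_finite by blast
  have m0: "m > 0" using o0 oG by (cases m) auto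
  have p1: "p > 1" using prime_gt_1_nat[OF pp] .
  have q0: "q > 0" using prime_gt_1_nat[OF pq] by simp
  have p0: "p > 0" using p1 by simp
  obtain Q where sQ: "subgroup Q G" and cQ: "card Q = q"
    using sylow_thm[OF pq is_group _ fin, of 1 "p * m"] oG by (auto simp: mult.commute mult.left_commute)
  have ndq: "\<not> q^2 dvd order G"
  proof
    assume "q^2 dvd order G"
    then have "q * q dvd q * (p * m)" using oG by (simp add: power2_eq_square mult.commute mult.left_commute)
    then have "q dvd p * m" using q0 by simp
    then have "q dvd p \<or> q dvd m" using pq prime_dvd_mult_nat by blast
    then show False
    proof
      assume "q dvd p"
      then have "q = 1 \<or> q = p" using pp unfolding prime_nat_iff by blast
      then show False using lt pq by (auto simp: prime_nat_iff)
    next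
      assume "q dvd m"
      then have "q \<le> m" using m0 by (simp add: dvd_imp_le)
      then show False using m84 qb by simp
    qed
  qed
  define NQ where "NQ = {g \<in> carrier G. g <# Q #> inv g = Q}"
  obtain nq where nq: "nq * card NQ = order G" "nq mod q = 1"
    using conj_class_count(1)[OF fin sQ cQ pq ndq] NQ_def by blast
  have sNQ: "subgroup NQ G" using conj_class_count(2)[OF fin sQ cQ pq ndq] NQ_def by simp
  have QNQ: "Q \<subseteq> NQ" using conj_class_count(3)[OF fin sQ cQ pq ndq] NQ_def by simp
  have small: False if "nq dvd m" "nq \<noteq> 1"
  proof -
    have "nq \<le> m" using that m0 by (simp add: dvd_imp_le)
    then have "nq < q" using m84 qb by simp
    then show False using nq(2) that(2) by simp
  qed
  show ?thesis
  proof (cases "nq = 1")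
    case True
    then have "card NQ = order G" using nq by simp
    then have "NQ = carrier G" using all_conj_eq[OF fin _] NQ_def by auto
    then show ?thesis using sQ cQ NQ_def by auto
  next
    case nq1: False
    obtain c where c: "card NQ = q * c" using sub_card_dvd[OF sQ sNQ QNQ] cQ by auto
    have nqc: "nq * c = p * m"
    proof -
      have "q * (nq * c) = q * (p * m)" using nq(1) c oG by (simp add: mult.commute mult.left_commute)
      then show ?thesis using q0 by simp
    qed
    have "p dvd nq"
    proof (rule ccontr)
      assume npd: "\<not> p dvd nq"
      have "p dvd nq * c" using nqc by simp
      then have "p dvd c" using npd pp prime_dvd_mult_nat by blast
      then obtain c2 where "c = p * c2" by auto
      then have "nq * c2 = m" using nqc p0 by (simp add: mult.commute mult.left_commute)
      then have "nq dvd m" by (metis dvd_triv_left)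
      then show False using small nq1 by simp
    qed
    then obtain d where d: "nq = p * d" by auto
    have dc: "d * c = m" using nqc d p0 by (simp add: mult.commute mult.left_commute)
    have dm: "d \<le> 84"
    proof -
      have "c > 0" using dc m0 by (cases c) auto
      then have "d \<le> d * c" by simp
      then show ?thesis using dc m84 by simp
    qed
    have p84: "84 < p"
    proof (rule ccontr)
      assume "\<not> 84 < p"
      then have "p \<le> 84" by simp
      then have "p * d \<le> 84 * 84" using mult_le_mono[OF _ dm] by blast
      then have "nq \<le> 84 * 84" using d by simp
      then have "nq < q" using qb by simp
      then show False using nq(2) nq1 by simp
    qed
    have ndp: "\<not> p^2 dvd order G"
    proof
      assume "p^2 dvd order G"
      then have "p * p dvd p * (q * m)" using oG by (simp add: power2_eq_square mult.commute mult.left_commute)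
      then have "p dvd q * m" using p0 by simp
      then have "p dvd q \<or> p dvd m" using pp prime_dvd_mult_nat by blast
      then show False
      proof
        assume "p dvd q"
        then have "p = 1 \<or> p = q" using pq unfolding prime_nat_iff by blast
        then show False using lt p1 by auto
      next
        assume "p dvd m"
        then have "p \<le> m" using m0 by (simp add: dvd_imp_le)
        then show False using m84 p84 by simp
      qed
    qed
    obtain P where sP: "subgroup P G" and cP: "card P = p"
      using sylow_thm[OF pp is_group _ fin, of 1 "q * m"] oG by (auto simp: mult.commute mult.left_commute)
    define NP where "NP = {g \<in> carrier G. g <# P #> inv g = P}"
    obtain np where np: "np * card NP = order G" "np mod p = 1"
      using conj_class_count(1)[OF fin sP cP pp ndp] NP_def by blast
    have sNP: "subgroup NP G" using conj_class_count(2)[OF fin sP cP pp ndp] NP_def by simp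
    have PNP: "P \<subseteq> NP" using conj_class_count(3)[OF fin sP cP pp ndp] NP_def by simp
    show ?thesis
    proof (cases "np = 1")
      case True
      then have "card NP = order G" using np by simp
      then have "NP = carrier G" using all_conj_eq[OF fin _] NP_def by auto
      then have Pn: "\<forall>g\<in>carrier G. g <# P #> inv g = P" using NP_def by auto
      have "\<forall>a\<in>P. a <# Q #> inv a = Q" using normal_prime_centralized[OF fin sP cP sQ cQ pq lt Pn] .
      then have "P \<subseteq> NQ" unfolding NQ_def using subgroup.subset[OF sP] by auto
      then have "p dvd q * c" using sub_card_dvd[OF sP sNQ] cP c by simp
      then have "p dvd q \<or> p dvd c" using pp prime_dvd_mult_nat by blast
      moreover have "\<not> p dvd q"
      proof
        assume "p dvd q"
        then have "p = 1 \<or> p = q" using pq unfolding prime_nat_iff by blast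
        then show False using lt p1 by auto
      qed
      ultimately have "p dvd c" by simp
      then obtain c3 where "c = p * c3" by auto
      then have "nq * c3 = m" using nqc p0 by (simp add: mult.commute mult.left_commute)
      then have "nq dvd m" by (metis dvd_triv_left)
      then show ?thesis using small nq1 by simp
    next
      case np1: False
      obtain c' where c': "card NP = p * c'" using sub_card_dvd[OF sP sNP PNP] cP by auto
      have npc: "np * c' = q * m"
      proof -
        have "p * (np * c') = p * (q * m)" using np(1) c' oG by (simp add: mult.commute mult.left_commute)
        then show ?thesis using p0 by simp
      qed
      have "q dvd np"
      proof (rule ccontr)
        assume nqd: "\<not> q dvd np"
        have "q dvd np * c'" using npc by simp
        then have "q dvd c'" using nqd pq prime_dvd_mult_nat by blast
        then obtain c4 where "c' = q * c4" by auto
        then have "np * c4 = m" using npc q0 by (simp add: mult.commute mult.left_commute)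
        then have "np dvd m" by (metis dvd_triv_left)
        then have "np \<le> m" using m0 by (simp add: dvd_imp_le)
        then have "np < p" using m84 p84 by simp
        then show False using np(2) np1 by simp
      qed
      then obtain e where e: "np = q * e" by auto
      have ec: "e * c' = m" using npc e q0 by (simp add: mult.commute mult.left_commute)
      have "(p * d) mod q = 1" using nq(2) d by simp
      moreover have "(q * e) mod p = 1" using np(2) e by simp
      ultimately show ?thesis using nt_contra[OF lt m84 qb m0 p1 dc _ ec] by blast
    qed
  qed
qed

end

lemma hurwitz_D:
  fixes X Y :: int
  assumes X: "X \<ge> 1" and Y: "Y \<ge> 1" and D: "X*Y - 2*X - 2*Y > 0"
  shows "21 * (X*Y - 2*X - 2*Y) \<ge> X * Y"
proof (cases "X \<le> 4")
  case True
  then have "X = 1 \<or> X = 2 \<or> X = 3 \<or> X = 4" using X by auto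
  then show ?thesis using D by auto
next
  case X5: False
  show ?thesis
  proof (cases "Y \<le> 4")
    case True
    then have "Y = 1 \<or> Y = 2 \<or> Y = 3 \<or> Y = 4" using Y by auto
    then show ?thesis using D by auto
  next
    case False
    have a: "X * Y \<ge> 5 * Y" using X5 Y by (intro mult_right_mono) auto
    have b: "X * Y \<ge> X * 5" using False X by (intro mult_left_mono) auto
    have e: "21 * (X*Y - 2*X - 2*Y) = 21*(X*Y) - 42*X - 42*Y" by (simp add: algebra_simps)
    show ?thesis using a b e X5 False by linarith
  qed
qed

lemma pair_bound:
  fixes X Y M :: int
  assumes X: "X \<ge> 1" and Y: "Y \<ge> 1" and XY: "X \<le> Y" and M5: "M \<ge> 5" and M84: "M \<le> 84"
    and A: "(M - 4) * X * Y = 2 * M * (X + Y)"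
  shows "X \<le> 20 \<and> Y \<le> 3360"
proof -
  have "2 * M * (X + Y) \<le> 2 * M * (2 * Y)" using XY M5 by (intro mult_left_mono) auto
  then have "((M - 4) * X) * Y \<le> (4 * M) * Y" using A by (simp add: algebra_simps)
  then have B: "(M - 4) * X \<le> 4 * M" using Y by simp
  have X20: "X \<le> 20"
  proof (rule ccontr)
    assume "\<not> X \<le> 20"
    then have "(M - 4) * X \<ge> (M - 4) * 21" using M5 by (intro mult_left_mono) auto
    moreover have "(M - 4) * 21 = 21 * M - 84" by (simp add: algebra_simps)
    ultimately show False using B M5 by linarith
  qed
  have C: "Y * ((M - 4) * X - 2 * M) = 2 * M * X" using A by (simp add: algebra_simps)
  have "2 * M * X > 0" using M5 X by simp
  then have "Y * ((M - 4) * X - 2 * M) > 0" using C by simp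
  then have F: "(M - 4) * X - 2 * M \<ge> 1" using Y by (simp add: zero_less_mult_iff)
  have "Y \<le> Y * ((M - 4) * X - 2 * M)" using F Y by (metis mult.right_neutral mult_left_mono order_trans zero_le_one)
  also have "\<dots> = 2 * M * X" using C .
  also have "\<dots> \<le> 2 * 84 * 20"
  proof -
    have "2 * M * X \<le> 2 * 84 * X" using M84 X by (intro mult_right_mono) auto
    also have "\<dots> \<le> 2 * 84 * 20" using X20 by simp
    finally show ?thesis .
  qed
  finally show ?thesis using X20 by simp
qed

lemma hurwitz_arith:
  fixes X Y M :: int
  assumes X: "X \<ge> 1" and Y: "Y \<ge> 1" and M: "M \<ge> 0" and E: "M * (X*Y - 2*X - 2*Y) = 4*X*Y"
  shows "M \<le> 84 \<and> X \<le> 3360 \<and> Y \<le> 3360"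
proof -
  define D where "D = X*Y - 2*X - 2*Y"
  have XY0: "X * Y > 0" using X Y by simp
  then have MD: "M * D > 0" using E D_def by simp
  then have D0: "D > 0" using M by (simp add: zero_less_mult_iff)
  have h: "21 * D \<ge> X * Y" using hurwitz_D[OF X Y] D0 D_def by simp
  have "M * D \<le> 84 * D" using E D_def h by simp
  then have M84: "M \<le> 84" using D0 by simp
  have "M * D > 4 * D" using E D_def X Y by simp
  then have M5: "M \<ge> 5" using D0 by simp
  have A: "(M - 4) * X * Y = 2 * M * (X + Y)" using E by (simp add: algebra_simps)
  show ?thesis
  proof (cases "X \<le> Y")
    case True
    then show ?thesis using pair_bound[OF X Y True M5 M84 A] M84 by simp
  next
    case False
    have A': "(M - 4) * Y * X = 2 * M * (Y + X)" using A by (simp add: algebra_simps)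
    show ?thesis using pair_bound[OF Y X _ M5 M84 A'] False M84 by simp
  qed
qed

lemma key_bound:
  fixes G :: "('g, 'b) monoid_scheme" (structure)
  assumes rm: "regular_map G r t l" and ec: "euler_char G r t l = - real (p * q)"
    and dv: "p * q dvd order G" and pp: "prime p" and pq: "prime q" and lt: "p < q"
  shows "q \<le> 14112 \<and> group.ord G (r \<otimes>\<^bsub>G\<^esub> t) \<le> 3360 \<and> group.ord G (r \<otimes>\<^bsub>G\<^esub> l) \<le> 3360"
proof -
  interpret group G using rm unfolding regular_map_def by blast
  have fin: "finite (carrier G)" using rm unfolding regular_map_def by blast
  have ir: "involution G r" and it: "involution G t" and il: "involution G l"
    using rm unfolding regular_map_def by auto
  have tl: "t \<otimes> l = l \<otimes> t" and gen: "generate G {r, t, l} = carrier G"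
    using rm unfolding regular_map_def by auto
  have rG: "r \<in> carrier G" and rr: "r \<otimes> r = \<one>" using ir unfolding involution_def by auto
  have tG: "t \<in> carrier G" and tt: "t \<otimes> t = \<one>" using it unfolding involution_def by auto
  have lG: "l \<in> carrier G" and ll: "l \<otimes> l = \<one>" using il unfolding involution_def by auto
  define X where "X = ord (r \<otimes> t)"
  define Y where "Y = ord (r \<otimes> l)"
  have X1: "X \<ge> 1" unfolding X_def using ord_ge_1[OF fin] rG tG by simp
  have Y1: "Y \<ge> 1" unfolding Y_def using ord_ge_1[OF fin] rG lG by simp
  obtain m where oG: "order G = p * q * m" using dv by (auto elim: dvdE)
  have p0: "real p > 0" and q0: "real q > 0" using prime_gt_1_nat[OF pp] prime_gt_1_nat[OF pq] by auto
  have x0: "real X > 0" and y0: "real Y > 0" using X1 Y1 by auto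
  have e1: "- (real (order G) * (real X * real Y - 2 * real X - 2 * real Y)) / (4 * real X * real Y) = - real (p * q)"
    using ec unfolding euler_char_def X_def Y_def Let_def by simp
  then have "real (order G) * (real X * real Y - 2 * real X - 2 * real Y) = real (p * q) * (4 * real X * real Y)"
    using x0 y0 by (simp add: field_simps)
  then have "(real p * real q) * (real m * (real X * real Y - 2 * real X - 2 * real Y)) = (real p * real q) * (4 * real X * real Y)"
    using oG by (simp add: algebra_simps)
  then have eqr: "real m * (real X * real Y - 2 * real X - 2 * real Y) = 4 * real X * real Y"
    using p0 q0 by simp
  have "real_of_int (int m * (int X * int Y - 2 * int X - 2 * int Y)) = real_of_int (4 * int X * int Y)"
    using eqr by simp
  then have eqi: "int m * (int X * int Y - 2 * int X - 2 * int Y) = 4 * int X * int Y"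
    by (simp only: of_int_eq_iff)
  have hb: "int m \<le> 84 \<and> int X \<le> 3360 \<and> int Y \<le> 3360"
    using hurwitz_arith[OF _ _ _ eqi] X1 Y1 by simp
  then have m84: "m \<le> 84" and X3: "X \<le> 3360" and Y3: "Y \<le> 3360" by auto
  have qb: "q \<le> 14112"
  proof (rule ccontr)
    assume "\<not> q \<le> 14112"
    then have qb: "14112 < q" by simp
    obtain Q where sQ: "subgroup Q G" and cQ: "card Q = q" and nQ: "\<forall>s\<in>carrier G. s <# Q #> inv s = Q"
      using big_q_normal[OF fin oG pp pq lt m84 qb] by blast
    have QG: "Q \<subseteq> carrier G" using subgroup.subset[OF sQ] .
    have finQ: "finite Q" using fin QG finite_subset by blast
    obtain g where gQ: "g \<in> Q" and g1: "g \<noteq> \<one>"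
    proof (rule ccontr)
      assume "\<not> thesis"
      then have "Q \<subseteq> {\<one>}" using that by blast
      then have "card Q \<le> card {\<one>}" by (intro card_mono) auto
      then have "card Q \<le> 1" by simp
      then show False using cQ qb by simp
    qed
    have gG: "g \<in> carrier G" using gQ QG by auto
    have sgen: "subgroup (generate G {g}) G" using generate_is_subgroup gG by simp
    have gsub: "generate G {g} \<subseteq> Q" using generate_subgroup_incl[OF _ sQ] gQ by simp
    have "ord g dvd q" using sub_card_dvd[OF sgen sQ gsub] generate_pow_card[OF gG] cQ by simp
    moreover have "ord g \<noteq> 1" using ord_eq_1[OF gG] g1 by simp
    ultimately have og: "ord g = q" using pq unfolding prime_nat_iff by blast
    have "card (generate G {g}) = card Q" using generate_pow_card[OF gG] og cQ by simp
    then have geq: "generate G {g} = Q" using card_subset_eq[OF finQ gsub] by simp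
    have nrm: "\<forall>s\<in>carrier G. s \<otimes> g \<otimes> inv s \<in> generate G {g}"
    proof
      fix s assume s: "s \<in> carrier G"
      have "s \<otimes> g \<otimes> inv s \<in> s <# Q #> inv s" using conj_image[OF s QG] gQ by auto
      then show "s \<otimes> g \<otimes> inv s \<in> generate G {g}" using nQ s geq by simp
    qed
    have m0: "m > 0" using oG fin order_gt_0_iff_finite by (cases m) auto
    have nd: "\<not> q^2 dvd order G"
    proof
      assume "q^2 dvd order G"
      then have "q * q dvd q * (p * m)" using oG by (simp add: power2_eq_square mult.commute mult.left_commute)
      then have "q dvd p * m" using q0 by simp
      then have "q dvd p \<or> q dvd m" using pq prime_dvd_mult_nat by blast
      then show False
      proof
        assume "q dvd p"
        then have "q = 1 \<or> q = p" using pp unfolding prime_nat_iff by blast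
        then show False using lt pq by (auto simp: prime_nat_iff)
      next
        assume "q dvd m"
        then have "q \<le> m" using m0 by (simp add: dvd_imp_le)
        then show False using m84 qb by simp
      qed
    qed
    define A where "A = {r, t, l}"
    have AG: "A \<subseteq> carrier G" using A_def rG tG lG by auto
    have Ainv: "\<forall>a\<in>A. a \<otimes> a = \<one>" using A_def rr tt ll by auto
    have ordb: "1 \<le> ord (a \<otimes> b) \<and> ord (a \<otimes> b) \<le> 3360" if a: "a \<in> A" and b: "b \<in> A" for a b
    proof -
      have abG: "a \<otimes> b \<in> carrier G" using a b AG by auto
      have lo: "1 \<le> ord (a \<otimes> b)" using ord_ge_1[OF fin abG] .
      have tr: "t \<otimes> r = inv (r \<otimes> t)" using inv_mult_group[OF rG tG] invol_inv[OF rG rr] invol_inv[OF tG tt] by simp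
      have lr: "l \<otimes> r = inv (r \<otimes> l)" using inv_mult_group[OF rG lG] invol_inv[OF rG rr] invol_inv[OF lG ll] by simp
      have tl2: "(t \<otimes> l) [^] (2::nat) = \<one>"
      proof -
        have "(t \<otimes> l) [^] (2::nat) = t \<otimes> (l \<otimes> t) \<otimes> l" using tG lG by (simp add: numeral_2_eq_2 m_assoc)
        also have "\<dots> = t \<otimes> (t \<otimes> l) \<otimes> l" using tl by simp
        also have "\<dots> = \<one>" using tG lG tt ll by (simp add: m_assoc invol_cancel)
        finally show ?thesis .
      qed
      have otl: "ord (t \<otimes> l) \<le> 2" using pow_eq_id[of "t \<otimes> l" 2] tl2 tG lG by (simp add: dvd_imp_le)
      have "ord (a \<otimes> b) \<le> 3360"
        using a b unfolding A_def
        apply (elim insertE emptyE)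
        using rr tt ll X3 Y3 otl tl tr lr
        by (simp_all add: X_def Y_def ord_inv rG tG lG)
      then show ?thesis using lo by simp
    qed
    have prods: "\<forall>a\<in>A. \<forall>b\<in>A. \<exists>k. (a \<otimes> b) [^] (k::nat) = \<one> \<and> \<not> q dvd k"
    proof (intro ballI)
      fix a b assume a: "a \<in> A" and b: "b \<in> A"
      have abG: "a \<otimes> b \<in> carrier G" using a b AG by auto
      have "\<not> q dvd ord (a \<otimes> b)"
      proof
        assume "q dvd ord (a \<otimes> b)"
        then have "q \<le> ord (a \<otimes> b)" using ordb[OF a b] by (simp add: dvd_imp_le)
        then show False using ordb[OF a b] qb by simp
      qed
      then show "\<exists>k. (a \<otimes> b) [^] (k::nat) = \<one> \<and> \<not> q dvd k" using pow_ord_eq_1[OF abG] by blast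
    qed
    have q2: "q \<noteq> 2" using qb by simp
    show False
      using main_group_lemma[OF fin AG Ainv _ prods gG og pq q2 nrm nd] gen A_def by simp
  qed
  show ?thesis using qb X3 Y3 X_def Y_def by simp
qed

theorem theorem3p1:
  "finite {(T :: nat set, p :: nat, q :: nat).
      prime p \<and> prime q \<and> 5 \<le> p \<and> p < q \<and>
      (\<exists>(G :: 'g monoid) r t l. regular_map G r t l \<and> map_type G r t l = T \<and>
          euler_char G r t l = - real (p * q) \<and> p * q dvd order G)}"
proof (rule finite_subset[OF subsetI])
  show "finite (Pow {0..(3360::nat)} \<times> {0..(14112::nat)} \<times> {0..(14112::nat)})" by simp
next
  fix x assume xS: "x \<in> {(T :: nat set, p :: nat, q :: nat).
      prime p \<and> prime q \<and> 5 \<le> p \<and> p < q \<and>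
      (\<exists>(G :: 'g monoid) r t l. regular_map G r t l \<and> map_type G r t l = T \<and>
          euler_char G r t l = - real (p * q) \<and> p * q dvd order G)}"
  obtain T p q where x: "x = (T, p, q)" by (cases x) auto
  have P: "prime p \<and> prime q \<and> 5 \<le> p \<and> p < q \<and>
      (\<exists>(G :: 'g monoid) r t l. regular_map G r t l \<and> map_type G r t l = T \<and>
          euler_char G r t l = - real (p * q) \<and> p * q dvd order G)"
    using xS unfolding x by simp
  then obtain G :: "'g monoid" and r t l where rm: "regular_map G r t l" and mt: "map_type G r t l = T"
    and ec: "euler_char G r t l = - real (p * q)" and dv: "p * q dvd order G" by blast
  have pp: "prime p" and pq: "prime q" and lt: "p < q" using P by auto
  have kb: "q \<le> 14112 \<and> group.ord G (r \<otimes>\<^bsub>G\<^esub> t) \<le> 3360 \<and> group.ord G (r \<otimes>\<^bsub>G\<^esub> l) \<le> 3360"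
    by (rule key_bound[OF rm ec dv pp pq lt])
  have "T \<in> Pow {0..3360}" using kb mt unfolding map_type_def by auto
  moreover have "p \<in> {0..14112}" "q \<in> {0..14112}" using kb lt by auto
  ultimately show "x \<in> Pow {0..(3360::nat)} \<times> {0..(14112::nat)} \<times> {0..(14112::nat)}" using x by simp
qed

end
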